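(* Let $P$ be a finite order having no level-induced suborder isomorphic to $O_{obs1}$ and no level-induced suborder isomorphic to $O_{obs2}$ (in particular, any finite order with property (itov)). Then $P$ has a relatively maximum full trunk.
   Context: Orders are partial orders; $x\sim y$ means $x\ne y$ and $x,y$ incomparable. $O_{obs1}$ is the order on $\{a,b,c,d\}$ whose only comparabilities are $a<b$, $c<d$; $O_{obs2}$ is the order on $\{a,b,c,d\}$ whose only comparabilities are $a<b$, $c<d$, $c<b$. Property (itov): no induced suborder isomorphic to $O_{obs1}$ or $O_{obs2}$. For a well-founded (e.g. finite) order $Q$, $\mathrm{Level}_Q(x)=\sup\{\mathrm{Level}_Q(y)+1:y<x\}$. A level-induced suborder of $P$ is a subset $S$ with the induced order $P|_S$ such that for all $x,y\in S$: $\mathrm{Level}_{P|_S}(x)=\mathrm{Level}_{P|_S}(y)$ iff $\mathrm{Level}_P(x)=\mathrm{Level}_P(y)$. A trunk of $P$ is a subset $T$ such that for pairwise distinct $x,y,z\in T$, $x\sim y$ and $y\sim z$ imply $x\sim z$. A chain is maximum if it has maximum cardinality among chains of $P$. A full trunk is a trunk containing a maximum chain; a relatively maximum full trunk is a full trunk that is the unique inclusion-maximal full trunk of $P$. *)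

theory Defs
  imports Main
begin

text \<open>A (partial) order is a pair of a carrier set S and a reflexive, antisymmetric,
  transitive relation r on S (library notion partial_order_on).\<close>

definition strict_rel :: "'a rel \<Rightarrow> 'a rel" where
  "strict_rel r = r - Id"

text \<open>Level_Q(x) = sup { Level_Q(y)+1 : y < x }, by well-founded recursion
  (sup of the empty set is 0).\<close>
definition level :: "'a rel \<Rightarrow> 'a \<Rightarrow> nat" where
  "level r = wfrec (strict_rel r)
     (\<lambda>f x. Max (insert 0 ((\<lambda>y. f y + 1) ` {y. (y, x) \<in> strict_rel r})))"

definition induced :: "'a rel \<Rightarrow> 'a set \<Rightarrow> 'a rel" where
  "induced r T = r \<inter> (T \<times> T)"

definition level_induced :: "'a set \<Rightarrow> 'a rel \<Rightarrow> 'a set \<Rightarrow> bool" where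
  "level_induced S r T \<longleftrightarrow> T \<subseteq> S \<and>
     (\<forall>x\<in>T. \<forall>y\<in>T. level (induced r T) x = level (induced r T) y
                      \<longleftrightarrow> level r x = level r y)"

definition order_iso :: "'a set \<Rightarrow> 'a rel \<Rightarrow> 'b set \<Rightarrow> 'b rel \<Rightarrow> bool" where
  "order_iso A r B s \<longleftrightarrow> (\<exists>f. bij_betw f A B \<and>
     (\<forall>x\<in>A. \<forall>y\<in>A. (x, y) \<in> r \<longleftrightarrow> (f x, f y) \<in> s))"

text \<open>Obstructions on {a,b,c,d} = {0,1,2,3}: a = 0, b = 1, c = 2, d = 3.\<close>
definition obs_carrier :: "nat set" where
  "obs_carrier = {0, 1, 2, 3}"

definition O_obs1 :: "nat rel" where
  "O_obs1 = Id_on obs_carrier \<union> {(0, 1), (2, 3)}"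

definition O_obs2 :: "nat rel" where
  "O_obs2 = Id_on obs_carrier \<union> {(0, 1), (2, 3), (2, 1)}"

definition incomparable :: "'a rel \<Rightarrow> 'a \<Rightarrow> 'a \<Rightarrow> bool" where
  "incomparable r x y \<longleftrightarrow> x \<noteq> y \<and> (x, y) \<notin> r \<and> (y, x) \<notin> r"

definition trunk :: "'a set \<Rightarrow> 'a rel \<Rightarrow> 'a set \<Rightarrow> bool" where
  "trunk S r T \<longleftrightarrow> T \<subseteq> S \<and>
     (\<forall>x\<in>T. \<forall>y\<in>T. \<forall>z\<in>T. x \<noteq> y \<and> y \<noteq> z \<and> x \<noteq> z \<longrightarrow>
        incomparable r x y \<longrightarrow> incomparable r y z \<longrightarrow> incomparable r x z)"

definition is_chain :: "'a set \<Rightarrow> 'a rel \<Rightarrow> 'a set \<Rightarrow> bool" where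
  "is_chain S r C \<longleftrightarrow> C \<subseteq> S \<and> (\<forall>x\<in>C. \<forall>y\<in>C. (x, y) \<in> r \<or> (y, x) \<in> r)"

definition maximum_chain :: "'a set \<Rightarrow> 'a rel \<Rightarrow> 'a set \<Rightarrow> bool" where
  "maximum_chain S r C \<longleftrightarrow> is_chain S r C \<and>
     (\<forall>C'. is_chain S r C' \<longrightarrow> card C' \<le> card C)"

definition full_trunk :: "'a set \<Rightarrow> 'a rel \<Rightarrow> 'a set \<Rightarrow> bool" where
  "full_trunk S r T \<longleftrightarrow> trunk S r T \<and> (\<exists>C. maximum_chain S r C \<and> C \<subseteq> T)"

definition maximal_full_trunk :: "'a set \<Rightarrow> 'a rel \<Rightarrow> 'a set \<Rightarrow> bool" where
  "maximal_full_trunk S r T \<longleftrightarrow> full_trunk S r T \<and>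
     (\<forall>T'. full_trunk S r T' \<and> T \<subseteq> T' \<longrightarrow> T' = T)"

definition relatively_maximum_full_trunk :: "'a set \<Rightarrow> 'a rel \<Rightarrow> 'a set \<Rightarrow> bool" where
  "relatively_maximum_full_trunk S r T \<longleftrightarrow> maximal_full_trunk S r T \<and>
     (\<forall>T'. maximal_full_trunk S r T' \<longrightarrow> T' = T)"

end

theory Submission imports Defs begin

lemma wf_strict:
  assumes "finite r" "trans r" "antisym r"
  shows "wf (strict_rel r)"
proof -
  have tr: "trans (strict_rel r)" using assms(2,3)
    unfolding strict_rel_def trans_def antisym_def by blast
  have "acyclic (strict_rel r)"
    unfolding acyclic_def using trancl_id[OF tr] by (auto simp: strict_rel_def)
  moreover have "finite (strict_rel r)" using assms(1) unfolding strict_rel_def by simp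
  ultimately show ?thesis using wf_iff_acyclic_if_finite by blast
qed

lemma level_eq:
  assumes "wf (strict_rel r)"
  shows "level r x = Max (insert 0 ((\<lambda>y. level r y + 1) ` {y. (y, x) \<in> strict_rel r}))"
proof -
  have "level r x = (\<lambda>f x. Max (insert 0 ((\<lambda>y. f y + 1) ` {y. (y, x) \<in> strict_rel r})))
      (cut (level r) (strict_rel r) x) x"
    unfolding level_def by (rule wfrec[OF assms])
  also have "\<dots> = Max (insert 0 ((\<lambda>y. level r y + 1) ` {y. (y, x) \<in> strict_rel r}))"
    by (auto simp: cut_apply intro!: arg_cong[where f=Max] image_cong)
  finally show ?thesis .
qed

lemma level_less:
  assumes "wf (strict_rel r)" "finite r" "(y, x) \<in> r" "y \<noteq> x"
  shows "level r y < level r x"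
proof -
  have fin: "finite {y. (y, x) \<in> strict_rel r}"
    using assms(2) by (rule finite_subset[rotated, OF finite_imageI[of _ fst]]) (force simp: strict_rel_def)
  have "level r y + 1 \<le> Max (insert 0 ((\<lambda>y. level r y + 1) ` {y. (y, x) \<in> strict_rel r}))"
    using fin assms(3,4) by (intro Max_ge) (auto simp: strict_rel_def)
  then show ?thesis using level_eq[OF assms(1), of x] by simp
qed

lemma level_cases:
  assumes "wf (strict_rel r)" "finite r"
  shows "level r x = 0 \<or> (\<exists>y. (y, x) \<in> strict_rel r \<and> level r x = level r y + 1)"
proof -
  have fin: "finite {y. (y, x) \<in> strict_rel r}"
    using assms(2) by (rule finite_subset[rotated, OF finite_imageI[of _ fst]]) (force simp: strict_rel_def)
  have "Max (insert 0 ((\<lambda>y. level r y + 1) ` {y. (y, x) \<in> strict_rel r}))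
       \<in> insert 0 ((\<lambda>y. level r y + 1) ` {y. (y, x) \<in> strict_rel r})"
    using fin by (intro Max_in) auto
  then show ?thesis using level_eq[OF assms(1), of x] by auto
qed

lemma level_zero:
  assumes "wf (strict_rel r)" "\<And>y. (y, x) \<in> r \<Longrightarrow> y = x"
  shows "level r x = 0"
proof -
  have "{y. (y, x) \<in> strict_rel r} = {}" using assms(2) by (auto simp: strict_rel_def)
  then show ?thesis using level_eq[OF assms(1), of x] by simp
qed

lemma level_one:
  assumes "wf (strict_rel r)" "finite r" "(y, x) \<in> r" "y \<noteq> x"
    "\<And>z. (z, x) \<in> r \<Longrightarrow> z \<noteq> x \<Longrightarrow> level r z = 0"
  shows "level r x = 1"
proof -
  have "(\<lambda>y. level r y + 1) ` {y. (y, x) \<in> strict_rel r} = {1}"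
    using assms(3-5) by (auto simp: strict_rel_def)
  then show ?thesis using level_eq[OF assms(1), of x] by simp
qed


locale po =
  fixes S :: "'a set" and r :: "'a rel"
  assumes fin: "finite S" and po: "partial_order_on S r"
begin

lemma sub: "r \<subseteq> S \<times> S" using po by (rule partial_order_onD)
lemma tr: "trans r" using po by (rule partial_order_onD)
lemma an: "antisym r" using po by (rule partial_order_onD)
lemma rf: "x \<in> S \<Longrightarrow> (x, x) \<in> r" using partial_order_onD(1)[OF po] by (simp add: refl_on_def)
lemma finr: "finite r" using sub fin by (meson finite_SigmaI finite_subset)
lemma wfs: "wf (strict_rel r)" using wf_strict[OF finr tr an] .

lemma lvl_less: "(y, x) \<in> r \<Longrightarrow> y \<noteq> x \<Longrightarrow> level r y < level r x"
  using level_less[OF wfs finr] .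

lemma same_level: "(x, y) \<in> r \<Longrightarrow> level r x = level r y \<Longrightarrow> x = y"
  using lvl_less by force

lemma chain_exists:
  "z \<in> S \<Longrightarrow> \<exists>C. is_chain S r C \<and> card C = level r z + 1 \<and> (\<forall>c\<in>C. (c, z) \<in> r)"
proof (induction z rule: wf_induct_rule[OF wfs])
  case (1 z)
  from level_cases[OF wfs finr, of z] show ?case
  proof
    assume "level r z = 0"
    then show ?thesis using 1(2) rf by (intro exI[of _ "{z}"]) (auto simp: is_chain_def)
  next
    assume "\<exists>y. (y, z) \<in> strict_rel r \<and> level r z = level r y + 1"
    then obtain y where y: "(y, z) \<in> strict_rel r" "level r z = level r y + 1" by blast
    have yS: "y \<in> S" using y(1) sub by (auto simp: strict_rel_def)
    obtain C where C: "is_chain S r C" "card C = level r y + 1" "\<forall>c\<in>C. (c, y) \<in> r"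
      using 1(1)[OF y(1) yS] by blast
    have finC: "finite C" using C(1) fin by (auto simp: is_chain_def intro: finite_subset)
    have zC: "z \<notin> C"
    proof
      assume "z \<in> C"
      then have "(z, y) \<in> r" using C(3) by blast
      then show False using y(1) an by (auto simp: strict_rel_def antisym_def)
    qed
    have le: "\<forall>c\<in>C. (c, z) \<in> r" using C(3) y(1) tr by (auto simp: strict_rel_def trans_def)
    have "is_chain S r (insert z C)" using C(1) le 1(2) rf by (auto simp: is_chain_def)
    moreover have "card (insert z C) = level r z + 1" using finC zC C(2) y(2) by simp
    moreover have "\<forall>c\<in>insert z C. (c, z) \<in> r" using le 1(2) rf by auto
    ultimately show ?thesis by blast
  qed
qed

lemma chain_finite: "is_chain S r C \<Longrightarrow> finite C"
  using fin by (auto simp: is_chain_def intro: finite_subset)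

lemma max_chain_exists: "\<exists>C. maximum_chain S r C"
proof -
  let ?A = "{C. is_chain S r C}"
  have "?A \<subseteq> Pow S" by (auto simp: is_chain_def)
  then have "finite ?A" using fin by (meson finite_Pow_iff finite_subset)
  then have finA: "finite (card ` ?A)" by (rule finite_imageI)
  have "{} \<in> ?A" by (simp add: is_chain_def)
  then have ne: "card ` ?A \<noteq> {}" by blast
  have "Max (card ` ?A) \<in> card ` ?A" by (rule Max_in[OF finA ne])
  then obtain C where C: "C \<in> ?A" "card C = Max (card ` ?A)" by (metis imageE)
  have "\<forall>C'. is_chain S r C' \<longrightarrow> card C' \<le> card C"
  proof (intro allI impI)
    fix C' assume "is_chain S r C'"
    then have "card C' \<in> card ` ?A" by blast
    then show "card C' \<le> card C" using C(2) Max_ge[OF finA] by simp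
  qed
  then have "maximum_chain S r C" unfolding maximum_chain_def using C(1) by blast
  then show ?thesis by blast
qed

lemma level_bound: "maximum_chain S r C \<Longrightarrow> z \<in> S \<Longrightarrow> level r z < card C"
proof -
  assume a: "maximum_chain S r C" "z \<in> S"
  obtain D where D: "is_chain S r D" "card D = level r z + 1" using chain_exists[OF a(2)] by blast
  have "card D \<le> card C" using a(1) D(1) unfolding maximum_chain_def by blast
  then show ?thesis using D(2) by simp
qed

lemma level_image: assumes "maximum_chain S r C" shows "level r ` C = {0..<card C}"
proof -
  have ch: "is_chain S r C" using assms by (simp add: maximum_chain_def)
  have inj: "inj_on (level r) C"
  proof (rule inj_onI)
    fix a b assume ab: "a \<in> C" "b \<in> C" "level r a = level r b"
    from ch ab(1,2) have "(a, b) \<in> r \<or> (b, a) \<in> r" unfolding is_chain_def by blast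
    then show "a = b" using same_level[of a b] same_level[of b a] ab(3) by auto
  qed
  have sub: "level r ` C \<subseteq> {0..<card C}"
  proof
    fix l assume "l \<in> level r ` C"
    then obtain c where c: "c \<in> C" "l = level r c" by blast
    have "c \<in> S" using ch c(1) unfolding is_chain_def by blast
    then show "l \<in> {0..<card C}" using level_bound[OF assms] c(2) by simp
  qed
  have "card (level r ` C) = card {0..<card C}" using card_image[OF inj] by simp
  then show ?thesis by (rule card_subset_eq[OF finite_atLeastLessThan sub])
qed

lemma level_in_chain: "maximum_chain S r C \<Longrightarrow> z \<in> S \<Longrightarrow> \<exists>c\<in>C. level r c = level r z"
proof -
  assume a: "maximum_chain S r C" "z \<in> S"
  have "level r z \<in> {0..<card C}" using level_bound[OF a] by simp
  then have "level r z \<in> level r ` C" using level_image[OF a(1)] by simp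
  then show ?thesis by force
qed

lemma trunk_comp:
  assumes T: "trunk S r T" and C: "maximum_chain S r C" "C \<subseteq> T"
    and xy: "x \<in> T" "y \<in> T" "level r x \<noteq> level r y"
  shows "(x, y) \<in> r \<or> (y, x) \<in> r"
proof (rule ccontr)
  assume nc: "\<not> ?thesis"
  have TS: "T \<subseteq> S" using T by (simp add: trunk_def)
  have trk: "\<And>a b c. a \<in> T \<Longrightarrow> b \<in> T \<Longrightarrow> c \<in> T \<Longrightarrow> a \<noteq> b \<Longrightarrow> b \<noteq> c \<Longrightarrow> a \<noteq> c \<Longrightarrow>
     incomparable r a b \<Longrightarrow> incomparable r b c \<Longrightarrow> incomparable r a c"
    using T unfolding trunk_def by blast
  have inc_same: "\<And>a b. a \<noteq> b \<Longrightarrow> level r a = level r b \<Longrightarrow> incomparable r a b"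
    using same_level unfolding incomparable_def by force
  have xS: "x \<in> S" "y \<in> S" using xy(1,2) TS by blast+
  obtain cx where cx: "cx \<in> C" "level r cx = level r x" using level_in_chain[OF C(1) xS(1)] by blast
  obtain cy where cy: "cy \<in> C" "level r cy = level r y" using level_in_chain[OF C(1) xS(2)] by blast
  have ixy: "incomparable r x y" using nc xy(3) by (auto simp: incomparable_def)
  have i1: "incomparable r cx y"
  proof (cases "cx = x")
    case True then show ?thesis using ixy by simp
  next
    case False
    have a: "cx \<in> T" using cx C(2) by blast
    have b: "cx \<noteq> y" "x \<noteq> y" using cx(2) xy(3) by auto
    show ?thesis by (rule trk[OF a xy(1) xy(2) False b(2) b(1) inc_same[OF False cx(2)] ixy])
  qed
  have i2: "incomparable r cx cy"
  proof (cases "cy = y")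
    case True then show ?thesis using i1 by simp
  next
    case False
    have "incomparable r y cy" using inc_same[of y cy] False cy by auto
    have a: "cx \<in> T" "cy \<in> T" using cx cy C(2) by blast+
    have b: "cx \<noteq> cy" "cx \<noteq> y" using cx(2) cy(2) xy(3) by auto
    have c: "y \<noteq> cy" using False by simp
    show ?thesis by (rule trk[OF a(1) xy(2) a(2) b(2) c b(1) i1 \<open>incomparable r y cy\<close>])
  qed
  have "is_chain S r C" using C(1) by (simp add: maximum_chain_def)
  then have "(cx, cy) \<in> r \<or> (cy, cx) \<in> r" using cx(1) cy(1) unfolding is_chain_def by blast
  then show False using i2 unfolding incomparable_def by blast
qed

lemma nr: "a \<noteq> b \<Longrightarrow> level r b \<le> level r a \<Longrightarrow> (a, b) \<notin> r"
  using lvl_less by force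

lemma inc_same: "a \<noteq> b \<Longrightarrow> level r a = level r b \<Longrightarrow> incomparable r a b"
  unfolding incomparable_def using nr[of a b] nr[of b a] by simp

lemma obstruction:
  assumes S: "x \<in> S" "y1 \<in> S" "x2 \<in> S" "y \<in> S"
    and r1: "(x, y1) \<in> r" "(x2, y) \<in> r" "(x, y) \<notin> r"
    and l: "level r x2 = level r x" "level r y1 = level r y" "level r x < level r y"
    and d: "x \<noteq> x2" "y \<noteq> y1"
  shows "\<exists>T. level_induced S r T \<and> (order_iso T (induced r T) obs_carrier O_obs1 \<or>
              order_iso T (induced r T) obs_carrier O_obs2)"
proof -
  have d2: "x \<noteq> y1" "x \<noteq> y" "x2 \<noteq> y1" "x2 \<noteq> y" using l by auto
  have n: "(y, x) \<notin> r" "(y1, x) \<notin> r" "(y, x2) \<notin> r" "(y1, x2) \<notin> r"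
          "(x, x2) \<notin> r" "(x2, x) \<notin> r" "(y, y1) \<notin> r" "(y1, y) \<notin> r"
    using nr[of y x] nr[of y1 x] nr[of y x2] nr[of y1 x2] nr[of x x2] nr[of x2 x] nr[of y y1] nr[of y1 y]
      d d2 l by auto
  have rr: "(x, x) \<in> r" "(y1, y1) \<in> r" "(x2, x2) \<in> r" "(y, y) \<in> r" using S rf by auto
  define T where "T = {x, y1, x2, y}"
  define R where "R = induced r T"
  have memR: "\<And>a b. (a, b) \<in> R \<longleftrightarrow> (a, b) \<in> r \<and> a \<in> T \<and> b \<in> T"
    unfolding R_def induced_def by blast
  have finR: "finite R" unfolding R_def induced_def using finr by simp
  have trR: "trans R" unfolding R_def induced_def using tr unfolding trans_def by blast
  have anR: "antisym R" unfolding R_def induced_def using an unfolding antisym_def by blast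
  have wfR: "wf (strict_rel R)" by (rule wf_strict[OF finR trR anR])
  have Lx: "level R x = 0"
    by (rule level_zero[OF wfR]) (use n d d2 in \<open>auto simp: memR T_def\<close>)
  have Lx2: "level R x2 = 0"
    by (rule level_zero[OF wfR]) (use n d d2 in \<open>auto simp: memR T_def\<close>)
  have Ly1: "level R y1 = 1"
  proof (rule level_one[OF wfR finR, of x])
    show "(x, y1) \<in> R" using r1 by (simp add: memR T_def)
    show "x \<noteq> y1" using d2 by simp
    fix z assume "(z, y1) \<in> R" "z \<noteq> y1"
    then have "z = x \<or> z = x2" using n by (auto simp: memR T_def)
    then show "level R z = 0" using Lx Lx2 by auto
  qed
  have Ly: "level R y = 1"
  proof (rule level_one[OF wfR finR, of x2])
    show "(x2, y) \<in> R" using r1 by (simp add: memR T_def)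
    show "x2 \<noteq> y" using d2 by simp
    fix z assume "(z, y) \<in> R" "z \<noteq> y"
    then have "z = x \<or> z = x2" using n r1 by (auto simp: memR T_def)
    then show "level R z = 0" using Lx Lx2 by auto
  qed
  have li: "level_induced S r T"
  proof -
    have TS: "T \<subseteq> S" using S by (simp add: T_def)
    have A: "\<forall>w\<in>T. (level r w = level r x \<and> level R w = 0) \<or> (level r w = level r y \<and> level R w = 1)"
      unfolding T_def using Lx Lx2 Ly1 Ly l by simp
    have "\<forall>w\<in>T. \<forall>v\<in>T. level R w = level R v \<longleftrightarrow> level r w = level r v"
    proof (intro ballI)
      fix w v assume "w \<in> T" "v \<in> T"
      then show "level R w = level R v \<longleftrightarrow> level r w = level r v" using A l(3)
        by (metis less_irrefl zero_neq_one)
    qed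
    then show ?thesis unfolding level_induced_def R_def using TS by blast
  qed
  define f where "f = (\<lambda>w. if w = x then 0 else if w = y1 then 1 else if w = x2 then 2 else (3::nat))"
  have fv: "f x = 0" "f y1 = 1" "f x2 = 2" "f y = 3" using d d2 by (auto simp: f_def)
  have bij: "bij_betw f T obs_carrier"
    unfolding bij_betw_def inj_on_def T_def obs_carrier_def using fv by auto
  show ?thesis
  proof (cases "(x2, y1) \<in> r")
    case True
    have "order_iso T R obs_carrier O_obs2"
    proof -
      have "\<forall>w\<in>T. \<forall>v\<in>T. (w, v) \<in> R \<longleftrightarrow> (f w, f v) \<in> O_obs2"
        unfolding T_def memR using fv r1 n rr True d d2 d[symmetric] d2[symmetric]
        by (simp add: T_def O_obs2_def obs_carrier_def Id_on_iff)
      then show ?thesis unfolding order_iso_def using bij by blast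
    qed
    then show ?thesis using li R_def by blast
  next
    case False
    have "order_iso T R obs_carrier O_obs1"
    proof -
      have "\<forall>w\<in>T. \<forall>v\<in>T. (w, v) \<in> R \<longleftrightarrow> (f w, f v) \<in> O_obs1"
        unfolding T_def memR using fv r1 n rr False d d2 d[symmetric] d2[symmetric]
        by (simp add: T_def O_obs1_def obs_carrier_def Id_on_iff)
      then show ?thesis unfolding order_iso_def using bij by blast
    qed
    then show ?thesis using li R_def by blast
  qed
qed

lemma key:
  assumes no1: "\<not> (\<exists>T. level_induced S r T \<and> order_iso T (induced r T) obs_carrier O_obs1)"
    and no2: "\<not> (\<exists>T. level_induced S r T \<and> order_iso T (induced r T) obs_carrier O_obs2)"
    and T1: "full_trunk S r T1" and T2: "full_trunk S r T2"
    and xy: "x \<in> T1" "y \<in> T2" "level r x < level r y"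
  shows "(x, y) \<in> r"
proof (rule ccontr)
  assume nxy: "(x, y) \<notin> r"
  obtain C1 where C1: "maximum_chain S r C1" "C1 \<subseteq> T1" and tr1: "trunk S r T1"
    using T1 unfolding full_trunk_def by blast
  obtain C2 where C2: "maximum_chain S r C2" "C2 \<subseteq> T2" and tr2: "trunk S r T2"
    using T2 unfolding full_trunk_def by blast
  have T1S: "T1 \<subseteq> S" using tr1 by (simp add: trunk_def)
  have T2S: "T2 \<subseteq> S" using tr2 by (simp add: trunk_def)
  have xS: "x \<in> S" "y \<in> S" using xy T1S T2S by blast+
  obtain y1 where y1: "y1 \<in> C1" "level r y1 = level r y" using level_in_chain[OF C1(1) xS(2)] by blast
  obtain x2 where x2: "x2 \<in> C2" "level r x2 = level r x" using level_in_chain[OF C2(1) xS(1)] by blast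
  have y1T: "y1 \<in> T1" using y1 C1 by blast
  have x2T: "x2 \<in> T2" using x2 C2 by blast
  have "(x, y1) \<in> r \<or> (y1, x) \<in> r"
    using trunk_comp[OF tr1 C1 xy(1) y1T] y1(2) xy(3) by simp
  moreover have "y1 \<noteq> x" using y1(2) xy(3) by (metis less_irrefl)
  then have "(y1, x) \<notin> r" using nr[of y1 x] y1(2) xy(3) by simp
  ultimately have r1: "(x, y1) \<in> r" by blast
  have "(x2, y) \<in> r \<or> (y, x2) \<in> r"
    using trunk_comp[OF tr2 C2 x2T xy(2)] x2(2) xy(3) by simp
  moreover have "y \<noteq> x2" using x2(2) xy(3) by (metis less_irrefl)
  then have "(y, x2) \<notin> r" using nr[of y x2] x2(2) xy(3) by simp
  ultimately have r2: "(x2, y) \<in> r" by blast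
  have d: "x \<noteq> x2" "y \<noteq> y1" using r1 r2 nxy by auto
  have "y1 \<in> S" "x2 \<in> S" using y1T x2T T1S T2S by blast+
  from obstruction[OF xS(1) this(1) this(2) xS(2) r1 r2 nxy x2(2) y1(2) xy(3) d] no1 no2
  show False by blast
qed

lemma inc_level:
  assumes no1: "\<not> (\<exists>T. level_induced S r T \<and> order_iso T (induced r T) obs_carrier O_obs1)"
    and no2: "\<not> (\<exists>T. level_induced S r T \<and> order_iso T (induced r T) obs_carrier O_obs2)"
    and T1: "full_trunk S r T1" and T2: "full_trunk S r T2"
    and xy: "x \<in> T1" "y \<in> T2" "incomparable r x y"
  shows "level r x = level r y"
proof (rule ccontr)
  assume "level r x \<noteq> level r y"
  then have "level r x < level r y \<or> level r y < level r x" by arith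
  then have "(x, y) \<in> r \<or> (y, x) \<in> r"
    using key[OF no1 no2 T1 T2 xy(1,2)] key[OF no1 no2 T2 T1 xy(2,1)] by blast
  then show False using xy(3) by (simp add: incomparable_def)
qed

lemma chain_trunk: "maximum_chain S r C \<Longrightarrow> full_trunk S r C"
  unfolding full_trunk_def trunk_def maximum_chain_def is_chain_def incomparable_def by blast

end

theorem proposition8:
  fixes S :: "'a set" and r :: "'a rel"
  assumes "finite S" and "partial_order_on S r"
    and "\<not> (\<exists>T. level_induced S r T \<and> order_iso T (induced r T) obs_carrier O_obs1)"
    and "\<not> (\<exists>T. level_induced S r T \<and> order_iso T (induced r T) obs_carrier O_obs2)"
  shows "\<exists>T. relatively_maximum_full_trunk S r T"
proof -
  interpret po S r using assms(1,2) by unfold_locales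
  define U where "U = \<Union>{T. full_trunk S r T}"
  obtain C0 where C0: "maximum_chain S r C0" using max_chain_exists by blast
  have ftC0: "full_trunk S r C0" using chain_trunk[OF C0] .
  have US: "U \<subseteq> S" unfolding U_def full_trunk_def trunk_def by blast
  have C0U: "C0 \<subseteq> U" unfolding U_def using ftC0 by blast
  have trU: "trunk S r U" unfolding trunk_def
  proof (intro conjI US ballI impI)
    fix a b c assume abc: "a \<in> U" "b \<in> U" "c \<in> U" "a \<noteq> b \<and> b \<noteq> c \<and> a \<noteq> c"
      "incomparable r a b" "incomparable r b c"
    obtain Ta where "full_trunk S r Ta" "a \<in> Ta" using abc(1) unfolding U_def by blast
    moreover obtain Tb where "full_trunk S r Tb" "b \<in> Tb" using abc(2) unfolding U_def by blast
    moreover obtain Tc where "full_trunk S r Tc" "c \<in> Tc" using abc(3) unfolding U_def by blast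
    ultimately have "level r a = level r b" "level r b = level r c"
      using inc_level[OF assms(3,4)] abc(5,6) by blast+
    then show "incomparable r a c" using inc_same abc(4) by simp
  qed
  have ftU: "full_trunk S r U" unfolding full_trunk_def using trU C0 C0U by blast
  have sub: "\<And>T'. full_trunk S r T' \<Longrightarrow> T' \<subseteq> U" unfolding U_def by blast
  have "maximal_full_trunk S r U" unfolding maximal_full_trunk_def using ftU sub by blast
  moreover have "\<forall>T'. maximal_full_trunk S r T' \<longrightarrow> T' = U"
    unfolding maximal_full_trunk_def using ftU sub by blast
  ultimately show ?thesis unfolding relatively_maximum_full_trunk_def by blast
qed

end
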